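(* (Sufficiency) Let $f(\underline{X})=\sum_{\ell=1}^{L}\prod_{i=1}^{n} f_i^{(\ell)}(X_i)$ with arbitrary real functions $f_i^{(\ell)}$. If for every $i\in[n]$ and $\ell\in[L]$ the encoding of source $i$ perfectly secures $f_i^{(\ell)}(X_i)$, i.e. $\mathbb{E}[f_i^{(\ell)}(X_i)\mid g_i(X_i,K_i)]=\mathbb{E}[f_i^{(\ell)}(X_i)]$ for every observed value, then $f(\underline{X})$ is perfectly secured, i.e. $\mathbb{E}[f(\underline{X})\mid g(\underline{X})]=\mathbb{E}[f(\underline{X})]$ for every observed value. (Necessity) Suppose either (1) $f(\underline{X})=\sum_{i=1}^n f_i(X_i)$, or (2) $f(\underline{X})=\prod_{i=1}^n f_i(X_i)$ with $\prod_{i=1}^n\mathbb{E}[f_i(X_i)]\cdot\mathrm{var}[f_i(X_i)]\neq 0$. Then for any encoding scheme under which the receiver computes $f(\underline{X})$ exactly and $f(\underline{X})$ is perfectly secured, each $f_i(X_i)$ is recoverable by the receiver from $g_i(X_i,K_i)$ and $K_i$, and each $f_i(X_i)$ is perfectly secured, i.e. $\mathbb{E}[f_i(X_i)\mid g_i(X_i,K_i)]=\mathbb{E}[f_i(X_i)]$ for every observed value.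
   Context: Multi-source setting: $n$ sources; source $i$ produces $X_i$ from a finite alphabet $\mathcal{X}_i$, with $X_1,\dots,X_n$ mutually independent. Source $i$ shares a key $K_i$ uniform on $\{1,\dots,2^{k_i}\}$ with the receiver only; keys are independent of each other and of the sources. Source $i$ transmits $g_i(X_i,K_i)$, where for each key value the map $x\mapsto g_i(x,K_i)$ is such that the receiver (knowing all keys) can compute the desired function $f:\prod_i\mathcal{X}_i\to\mathbb{R}$ exactly. The eavesdropper observes $g(\underline{X})=(g_1(X_1,K_1),\dots,g_n(X_n,K_n))$ but no keys. Her distortion is $D_{ach}=\min_{\hat f}\mathbb{E}[(f(\underline{X})-\hat f(g(\underline{X})))^2]$ over all estimators $\hat f$, and $D_{max}=\mathrm{var}(f(\underline{X}))$. A real function $h$ of the sources is called perfectly secured if the eavesdropper's minimum mean squared error for estimating $h$ from her observation equals $\mathrm{var}(h)$, equivalently $\mathbb{E}[h\mid \text{observation}]=\mathbb{E}[h]$ for every observed value. *)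

theory Defs
  imports "HOL-Probability.Probability"
begin

definition key_pmf :: "nat \<Rightarrow> nat pmf" where
  "key_pmf k = pmf_of_set {1..2^k}"

definition joint_pmf :: "nat \<Rightarrow> (nat \<Rightarrow> 'x pmf) \<Rightarrow> (nat \<Rightarrow> nat) \<Rightarrow> ((nat \<Rightarrow> 'x) \<times> (nat \<Rightarrow> nat)) pmf" where
  "joint_pmf n P kk = pair_pmf (Pi_pmf {..<n} undefined P) (Pi_pmf {..<n} 0 (\<lambda>i. key_pmf (kk i)))"

definition local_pmf :: "(nat \<Rightarrow> 'x pmf) \<Rightarrow> (nat \<Rightarrow> nat) \<Rightarrow> nat \<Rightarrow> ('x \<times> nat) pmf" where
  "local_pmf P kk i = pair_pmf (P i) (key_pmf (kk i))"

definition eve_obs :: "nat \<Rightarrow> (nat \<Rightarrow> 'x \<Rightarrow> nat \<Rightarrow> 'y) \<Rightarrow> (nat \<Rightarrow> 'x) \<times> (nat \<Rightarrow> nat) \<Rightarrow> (nat \<Rightarrow> 'y)" where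
  "eve_obs n g \<omega> = restrict (\<lambda>i. g i (fst \<omega> i) (snd \<omega> i)) {..<n}"

definition perfectly_secured :: "'w pmf \<Rightarrow> ('w \<Rightarrow> 'o) \<Rightarrow> ('w \<Rightarrow> real) \<Rightarrow> bool" where
  "perfectly_secured M obs h \<longleftrightarrow>
     (\<forall>y \<in> obs ` set_pmf M.
        measure_pmf.expectation (cond_pmf M {\<omega>. obs \<omega> = y}) h = measure_pmf.expectation M h)"

definition receiver_computes :: "nat \<Rightarrow> (nat \<Rightarrow> 'x pmf) \<Rightarrow> (nat \<Rightarrow> nat) \<Rightarrow> (nat \<Rightarrow> 'x \<Rightarrow> nat \<Rightarrow> 'y)
    \<Rightarrow> ((nat \<Rightarrow> 'x) \<Rightarrow> real) \<Rightarrow> bool" where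
  "receiver_computes n P kk g f \<longleftrightarrow>
     (\<exists>dec. \<forall>\<omega> \<in> set_pmf (joint_pmf n P kk). dec (eve_obs n g \<omega>) (snd \<omega>) = f (fst \<omega>))"

definition locally_recoverable :: "(nat \<Rightarrow> 'x pmf) \<Rightarrow> (nat \<Rightarrow> nat) \<Rightarrow> (nat \<Rightarrow> 'x \<Rightarrow> nat \<Rightarrow> 'y)
    \<Rightarrow> nat \<Rightarrow> ('x \<Rightarrow> real) \<Rightarrow> bool" where
  "locally_recoverable P kk g i h \<longleftrightarrow>
     (\<exists>dec. \<forall>(x, k) \<in> set_pmf (local_pmf P kk i). dec (g i x k) k = h x)"

end

theory Submission
  imports Defs
begin

lemma exp_pair:
  fixes h :: "'a \<times> 'b \<Rightarrow> real"
  assumes "finite (set_pmf A)" "finite (set_pmf B)"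
  shows "measure_pmf.expectation (pair_pmf A B) h =
         measure_pmf.expectation A (\<lambda>a. measure_pmf.expectation B (\<lambda>b. h (a, b)))"
proof -
  have "measure_pmf.expectation (pair_pmf A B) h = (\<Sum>z\<in>set_pmf A \<times> set_pmf B. pmf (pair_pmf A B) z *\<^sub>R h z)"
    using assms by (intro integral_measure_pmf) auto
  also have "\<dots> = (\<Sum>a\<in>set_pmf A. \<Sum>b\<in>set_pmf B. pmf A a * (pmf B b * h (a, b)))"
    by (simp only: sum.cartesian_product, rule sum.cong) (auto simp: pmf_pair)
  also have "\<dots> = (\<Sum>a\<in>set_pmf A. pmf A a *\<^sub>R (\<Sum>b\<in>set_pmf B. pmf B b *\<^sub>R h (a, b)))"
    by (simp add: sum_distrib_left)
  also have "\<dots> = measure_pmf.expectation A (\<lambda>a. measure_pmf.expectation B (\<lambda>b. h (a, b)))"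
  proof -
    have inner: "measure_pmf.expectation B (\<lambda>b. h (a, b)) = (\<Sum>b\<in>set_pmf B. pmf B b *\<^sub>R h (a, b))" for a
      using assms by (intro integral_measure_pmf) auto
    show ?thesis
      using assms by (subst integral_measure_pmf[of "set_pmf A"]) (auto simp: inner)
  qed
  finally show ?thesis .
qed

lemma exp_Pi_prod:
  fixes f :: "'i \<Rightarrow> 'a \<Rightarrow> real"
  assumes "finite A" "\<And>x. x \<in> A \<Longrightarrow> finite (set_pmf (p x))"
  shows "measure_pmf.expectation (Pi_pmf A d p) (\<lambda>y. \<Prod>x\<in>A. f x (y x)) =
         (\<Prod>x\<in>A. measure_pmf.expectation (p x) (f x))"
  using assms
proof (induction A rule: finite_induct)
  case empty
  then show ?case by simp
next
  case (insert x A)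
  have finA: "finite (set_pmf (Pi_pmf A d p))"
    using insert by (subst set_Pi_pmf) auto
  have "measure_pmf.expectation (Pi_pmf (insert x A) d p) (\<lambda>y. \<Prod>z\<in>insert x A. f z (y z)) =
    measure_pmf.expectation (pair_pmf (p x) (Pi_pmf A d p)) (\<lambda>(a, b). \<Prod>z\<in>insert x A. f z ((b(x:=a)) z))"
    using insert by (simp add: Pi_pmf_insert case_prod_unfold)
  also have "\<dots> = measure_pmf.expectation (p x) (\<lambda>a. measure_pmf.expectation (Pi_pmf A d p)
                    (\<lambda>b. f x a * (\<Prod>z\<in>A. f z (b z))))"
  proof -
    have eq: "(\<Prod>z\<in>insert x A. f z ((b(x:=a)) z)) = f x a * (\<Prod>z\<in>A. f z (b z))" for a b
    proof -
      have "(\<Prod>z\<in>A. f z ((b(x:=a)) z)) = (\<Prod>z\<in>A. f z (b z))"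
        using insert by (intro prod.cong) auto
      then show ?thesis using insert by simp
    qed
    have "measure_pmf.expectation (pair_pmf (p x) (Pi_pmf A d p)) (\<lambda>(a, b). \<Prod>z\<in>insert x A. f z ((b(x:=a)) z))
       = measure_pmf.expectation (pair_pmf (p x) (Pi_pmf A d p)) (\<lambda>(a, b). f x a * (\<Prod>z\<in>A. f z (b z)))"
      by (simp only: eq)
    then show ?thesis using insert finA by (subst (asm) exp_pair) auto
  qed
  also have "\<dots> = measure_pmf.expectation (p x) (f x) * (\<Prod>z\<in>A. measure_pmf.expectation (p z) (f z))"
    using insert.prems by (simp add: insert.IH)
  also have "\<dots> = (\<Prod>z\<in>insert x A. measure_pmf.expectation (p z) (f z))"
    using insert by simp
  finally show ?case .
qed

lemma set_key_pmf: "set_pmf (key_pmf k) = {1..2^k}"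
  unfolding key_pmf_def by (subst set_pmf_of_set) auto

lemma fin_local:
  assumes "finite (set_pmf (P i))"
  shows "finite (set_pmf (local_pmf P kk i))"
  using assms by (simp add: local_pmf_def set_key_pmf)

lemma mem_joint:
  "\<omega> \<in> set_pmf (joint_pmf n P kk) \<longleftrightarrow>
    (\<forall>j<n. (fst \<omega> j, snd \<omega> j) \<in> set_pmf (local_pmf P kk j)) \<and>
    (\<forall>j. n \<le> j \<longrightarrow> fst \<omega> j = undefined \<and> snd \<omega> j = 0)"
  by (cases \<omega>) (auto simp: joint_pmf_def local_pmf_def set_Pi_pmf PiE_dflt_def not_less)

lemma fin_joint:
  assumes fin: "\<forall>i<n. finite (set_pmf (P i))"
  shows "finite (set_pmf (joint_pmf n P kk))"
  using fin by (auto simp: joint_pmf_def set_Pi_pmf set_key_pmf intro!: finite_PiE_dflt)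

lemma exp_joint_prod:
  fixes v :: "nat \<Rightarrow> 'x \<Rightarrow> nat \<Rightarrow> real"
  assumes fin: "\<forall>i<n. finite (set_pmf (P i))"
  shows "measure_pmf.expectation (joint_pmf n P kk) (\<lambda>\<omega>. \<Prod>j<n. v j (fst \<omega> j) (snd \<omega> j)) =
         (\<Prod>j<n. measure_pmf.expectation (local_pmf P kk j) (\<lambda>(x, k). v j x k))"
proof -
  have f1: "finite (set_pmf (Pi_pmf {..<n} undefined P))"
    using fin by (auto simp: set_Pi_pmf intro!: finite_PiE_dflt)
  have f2: "finite (set_pmf (Pi_pmf {..<n} 0 (\<lambda>i. key_pmf (kk i))))"
    by (auto simp: set_Pi_pmf set_key_pmf intro!: finite_PiE_dflt)
  have "measure_pmf.expectation (joint_pmf n P kk) (\<lambda>\<omega>. \<Prod>j<n. v j (fst \<omega> j) (snd \<omega> j)) =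
     measure_pmf.expectation (Pi_pmf {..<n} undefined P) (\<lambda>a.
       measure_pmf.expectation (Pi_pmf {..<n} 0 (\<lambda>i. key_pmf (kk i))) (\<lambda>b. \<Prod>j<n. v j (a j) (b j)))"
    unfolding joint_pmf_def using f1 f2 by (subst exp_pair) auto
  also have "\<dots> = measure_pmf.expectation (Pi_pmf {..<n} undefined P) (\<lambda>a.
       \<Prod>j<n. measure_pmf.expectation (key_pmf (kk j)) (v j (a j)))"
    by (subst exp_Pi_prod) (auto simp: set_key_pmf)
  also have "\<dots> = (\<Prod>j<n. measure_pmf.expectation (P j) (\<lambda>x. measure_pmf.expectation (key_pmf (kk j)) (v j x)))"
    using fin by (subst exp_Pi_prod) auto
  also have "\<dots> = (\<Prod>j<n. measure_pmf.expectation (local_pmf P kk j) (\<lambda>(x, k). v j x k))"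
    using fin by (intro prod.cong refl) (simp add: local_pmf_def exp_pair set_key_pmf)
  finally show ?thesis .
qed

lemma ce_eq:
  fixes h :: "'a \<Rightarrow> real"
  assumes fin: "finite (set_pmf M)" and y: "y \<in> obs ` set_pmf M"
  shows "measure_pmf.expectation (cond_pmf M {\<omega>. obs \<omega> = y}) h =
           measure_pmf.expectation M (\<lambda>\<omega>. (if obs \<omega> = y then 1 else 0) * h \<omega>) /
           measure_pmf.expectation M (\<lambda>\<omega>. if obs \<omega> = y then 1 else 0)"
    and "measure_pmf.expectation M (\<lambda>\<omega>. if obs \<omega> = y then 1 else 0) > (0::real)"
proof -
  let ?s = "{\<omega>. obs \<omega> = y}"
  have ne: "set_pmf M \<inter> ?s \<noteq> {}" using y by auto
  let ?m = "measure_pmf.prob M ?s"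
  have gen: "measure_pmf.expectation (cond_pmf M ?s) h' =
           measure_pmf.expectation M (\<lambda>\<omega>. (if obs \<omega> = y then 1 else 0) * h' \<omega>) / ?m" for h' :: "'a \<Rightarrow> real"
  proof -
    have "measure_pmf.expectation (cond_pmf M ?s) h' = (\<Sum>a\<in>set_pmf M. pmf (cond_pmf M ?s) a *\<^sub>R h' a)"
      using fin ne by (intro integral_measure_pmf) auto
    also have "\<dots> = (\<Sum>a\<in>set_pmf M. pmf M a *\<^sub>R ((if obs a = y then 1 else 0) * h' a)) / ?m"
      using ne by (simp add: pmf_cond sum_divide_distrib, intro sum.cong) auto
    also have "(\<Sum>a\<in>set_pmf M. pmf M a *\<^sub>R ((if obs a = y then 1 else 0) * h' a)) =
        measure_pmf.expectation M (\<lambda>\<omega>. (if obs \<omega> = y then 1 else 0) * h' \<omega>)"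
      using fin by (intro integral_measure_pmf[symmetric]) auto
    finally show ?thesis .
  qed
  have pos: "?m > 0" using y by (auto intro: measure_pmf_posI)
  have "1 = measure_pmf.expectation M (\<lambda>\<omega>. (if obs \<omega> = y then 1 else 0) * 1) / ?m"
    using gen[of "\<lambda>_. 1"] by simp
  then have m: "?m = measure_pmf.expectation M (\<lambda>\<omega>. if obs \<omega> = y then 1 else 0)"
    using pos by (simp add: field_simps)
  show "measure_pmf.expectation (cond_pmf M ?s) h =
           measure_pmf.expectation M (\<lambda>\<omega>. (if obs \<omega> = y then 1 else 0) * h \<omega>) /
           measure_pmf.expectation M (\<lambda>\<omega>. if obs \<omega> = y then 1 else 0)"
    using gen[of h] m by simp
  show "measure_pmf.expectation M (\<lambda>\<omega>. if obs \<omega> = y then 1 else 0) > (0::real)"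
    using pos m by simp
qed

lemma eve_eq:
  assumes "y \<in> eve_obs n g ` S"
  shows "(eve_obs n g \<omega> = y) \<longleftrightarrow> (\<forall>j<n. g j (fst \<omega> j) (snd \<omega> j) = y j)"
  using assms by (auto simp: eve_obs_def fun_eq_iff)

lemma ind_prod: "(if \<forall>j<(n::nat). Q j then 1 else 0::real) = (\<Prod>j<n. if Q j then 1 else 0)"
proof (cases "\<forall>j<n. Q j")
  case False
  then obtain j where "j < n" "\<not> Q j" by auto
  then have "(\<Prod>j<n. if Q j then 1 else 0::real) = 0" by (intro prod_zero) auto
  then show ?thesis using False by simp
qed (auto intro!: prod.neutral[symmetric])

lemma eve_img_local:
  assumes "y \<in> eve_obs n g ` set_pmf (joint_pmf n P kk)" "j < n"
  shows "y j \<in> (\<lambda>(x, k). g j x k) ` set_pmf (local_pmf P kk j)"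
proof -
  obtain \<omega> where w: "\<omega> \<in> set_pmf (joint_pmf n P kk)" "y = eve_obs n g \<omega>" using assms by auto
  then have "(fst \<omega> j, snd \<omega> j) \<in> set_pmf (local_pmf P kk j)" using assms(2) by (simp add: mem_joint)
  moreover have "y j = (\<lambda>(x, k). g j x k) (fst \<omega> j, snd \<omega> j)" using w assms(2) by (simp add: eve_obs_def)
  ultimately show ?thesis by blast
qed

lemma ce_joint:
  fixes u :: "nat \<Rightarrow> 'x \<Rightarrow> nat \<Rightarrow> real"
  assumes fin: "\<forall>i<n. finite (set_pmf (P i))"
    and y: "y \<in> eve_obs n g ` set_pmf (joint_pmf n P kk)"
  shows "measure_pmf.expectation (cond_pmf (joint_pmf n P kk) {\<omega>. eve_obs n g \<omega> = y})
            (\<lambda>\<omega>. \<Prod>j<n. u j (fst \<omega> j) (snd \<omega> j)) =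
         (\<Prod>j<n. measure_pmf.expectation (cond_pmf (local_pmf P kk j) {\<omega>. (\<lambda>(x, k). g j x k) \<omega> = y j})
            (\<lambda>(x, k). u j x k))"
proof -
  have ind: "(if eve_obs n g \<omega> = y then 1 else 0::real) = (\<Prod>j<n. if g j (fst \<omega> j) (snd \<omega> j) = y j then 1 else 0)" for \<omega>
    unfolding eve_eq[OF y] by (rule ind_prod)
  have Q1: "measure_pmf.expectation (joint_pmf n P kk) (\<lambda>\<omega>. (if eve_obs n g \<omega> = y then 1 else 0) * (\<Prod>j<n. u j (fst \<omega> j) (snd \<omega> j)))
     = (\<Prod>j<n. measure_pmf.expectation (local_pmf P kk j) (\<lambda>(x, k). (if g j x k = y j then 1 else 0) * u j x k))"
    unfolding ind prod.distrib[symmetric] by (rule exp_joint_prod[OF fin])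
  have Q2: "measure_pmf.expectation (joint_pmf n P kk) (\<lambda>\<omega>. (if eve_obs n g \<omega> = y then 1 else 0::real))
     = (\<Prod>j<n. measure_pmf.expectation (local_pmf P kk j) (\<lambda>(x, k). (if g j x k = y j then 1 else 0)))"
    unfolding ind by (rule exp_joint_prod[OF fin])
  have loc: "measure_pmf.expectation (cond_pmf (local_pmf P kk j) {\<omega>. (\<lambda>(x, k). g j x k) \<omega> = y j}) (\<lambda>(x, k). u j x k)
     = measure_pmf.expectation (local_pmf P kk j) (\<lambda>(x, k). (if g j x k = y j then 1 else 0) * u j x k) /
       measure_pmf.expectation (local_pmf P kk j) (\<lambda>(x, k). (if g j x k = y j then 1 else 0))" if j: "j < n" for j
  proof -
    have e1: "(\<lambda>\<omega>. (if (\<lambda>(x, k). g j x k) \<omega> = y j then 1 else 0) * (\<lambda>(x, k). u j x k) \<omega>)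
        = (\<lambda>(x, k). (if g j x k = y j then 1 else 0) * u j x k)" by (auto simp: fun_eq_iff)
    have e2: "(\<lambda>\<omega>. (if (\<lambda>(x, k). g j x k) \<omega> = y j then 1 else (0::real)))
        = (\<lambda>(x, k). (if g j x k = y j then 1 else 0))" by (auto simp: fun_eq_iff)
    show ?thesis
      using ce_eq(1)[OF fin_local eve_img_local[OF y j], where h="\<lambda>(x, k). u j x k"] fin j
      unfolding e1 e2 by simp
  qed
  show ?thesis
    using ce_eq(1)[OF fin_joint[OF fin] y] Q1 Q2 loc by (simp add: prod_dividef)
qed

lemma fin_cond:
  assumes "finite (set_pmf M)" "set_pmf M \<inter> s \<noteq> {}"
  shows "finite (set_pmf (cond_pmf M s))"
  using assms by (simp add: set_cond_pmf)

lemma ce_single: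
  fixes h :: "'x \<Rightarrow> nat \<Rightarrow> real"
  assumes fin: "\<forall>i<n. finite (set_pmf (P i))"
    and y: "y \<in> eve_obs n g ` set_pmf (joint_pmf n P kk)" and i: "i < n"
  shows "measure_pmf.expectation (cond_pmf (joint_pmf n P kk) {\<omega>. eve_obs n g \<omega> = y})
            (\<lambda>\<omega>. h (fst \<omega> i) (snd \<omega> i)) =
         measure_pmf.expectation (cond_pmf (local_pmf P kk i) {\<omega>. (\<lambda>(x, k). g i x k) \<omega> = y i})
            (\<lambda>(x, k). h x k)"
proof -
  have "measure_pmf.expectation (cond_pmf (joint_pmf n P kk) {\<omega>. eve_obs n g \<omega> = y})
            (\<lambda>\<omega>. h (fst \<omega> i) (snd \<omega> i)) =
        measure_pmf.expectation (cond_pmf (joint_pmf n P kk) {\<omega>. eve_obs n g \<omega> = y})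
            (\<lambda>\<omega>. \<Prod>j<n. if j = i then h (fst \<omega> j) (snd \<omega> j) else 1)"
    using i by (simp add: prod.delta)
  also have "\<dots> = (\<Prod>j<n. measure_pmf.expectation (cond_pmf (local_pmf P kk j) {\<omega>. (\<lambda>(x, k). g j x k) \<omega> = y j})
            (\<lambda>(x, k). if j = i then h x k else 1))"
    using ce_joint[OF fin y, of "\<lambda>j x k. if j = i then h x k else 1"] by simp
  also have "\<dots> = (\<Prod>j<n. if j = i then measure_pmf.expectation (cond_pmf (local_pmf P kk i) {\<omega>. (\<lambda>(x, k). g i x k) \<omega> = y i})
            (\<lambda>(x, k). h x k) else 1)"
    by (intro prod.cong refl) (auto simp: case_prod_unfold)
  also have "\<dots> = measure_pmf.expectation (cond_pmf (local_pmf P kk i) {\<omega>. (\<lambda>(x, k). g i x k) \<omega> = y i})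
            (\<lambda>(x, k). h x k)"
    using i by simp
  finally show ?thesis .
qed

lemma exp_single:
  fixes h :: "'x \<Rightarrow> nat \<Rightarrow> real"
  assumes fin: "\<forall>i<n. finite (set_pmf (P i))" and i: "i < n"
  shows "measure_pmf.expectation (joint_pmf n P kk) (\<lambda>\<omega>. h (fst \<omega> i) (snd \<omega> i)) =
         measure_pmf.expectation (local_pmf P kk i) (\<lambda>(x, k). h x k)"
proof -
  have "measure_pmf.expectation (joint_pmf n P kk) (\<lambda>\<omega>. h (fst \<omega> i) (snd \<omega> i)) =
        measure_pmf.expectation (joint_pmf n P kk)
            (\<lambda>\<omega>. \<Prod>j<n. if j = i then h (fst \<omega> j) (snd \<omega> j) else 1)"
    using i by (simp add: prod.delta)
  also have "\<dots> = (\<Prod>j<n. measure_pmf.expectation (local_pmf P kk j)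
            (\<lambda>(x, k). if j = i then h x k else 1))"
    using exp_joint_prod[OF fin, where v="\<lambda>j x k. if j = i then h x k else 1"] by simp
  also have "\<dots> = (\<Prod>j<n. if j = i then measure_pmf.expectation (local_pmf P kk i)
            (\<lambda>(x, k). h x k) else 1)"
    by (intro prod.cong refl) (auto simp: case_prod_unfold)
  also have "\<dots> = measure_pmf.expectation (local_pmf P kk i) (\<lambda>(x, k). h x k)"
    using i by simp
  finally show ?thesis .
qed

lemma total:
  fixes h :: "'a \<Rightarrow> real"
  assumes fin: "finite (set_pmf M)"
  shows "measure_pmf.expectation M h =
     (\<Sum>t\<in>obs ` set_pmf M. measure_pmf.expectation M (\<lambda>\<omega>. (if obs \<omega> = t then 1 else 0) * h \<omega>))"
proof -
  have "(\<Sum>t\<in>obs ` set_pmf M. measure_pmf.expectation M (\<lambda>\<omega>. (if obs \<omega> = t then 1 else 0) * h \<omega>)) =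
      measure_pmf.expectation M (\<lambda>\<omega>. \<Sum>t\<in>obs ` set_pmf M. (if obs \<omega> = t then 1 else 0) * h \<omega>)"
    by (rule Bochner_Integration.integral_sum[symmetric])
       (auto intro: integrable_measure_pmf_finite[OF fin])
  also have "\<dots> = measure_pmf.expectation M h"
  proof (intro integral_cong_AE)
    show "AE \<omega> in measure_pmf M. (\<Sum>t\<in>obs ` set_pmf M. (if obs \<omega> = t then 1 else 0) * h \<omega>) = h \<omega>"
    proof (rule AE_pmfI)
      fix \<omega> assume w: "\<omega> \<in> set_pmf M"
      have "(\<Sum>t\<in>obs ` set_pmf M. (if obs \<omega> = t then 1 else 0) * h \<omega>) = (\<Sum>t\<in>obs ` set_pmf M. if obs \<omega> = t then h \<omega> else 0)"
        by (intro sum.cong) auto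
      also have "\<dots> = h \<omega>" using fin w by (simp add: sum.delta')
      finally show "(\<Sum>t\<in>obs ` set_pmf M. (if obs \<omega> = t then 1 else 0) * h \<omega>) = h \<omega>" .
    qed
  qed auto
  finally show ?thesis ..
qed

lemma const_ce:
  fixes h :: "'a \<Rightarrow> real"
  assumes fin: "finite (set_pmf M)"
    and D: "\<And>t. t \<in> obs ` set_pmf M \<Longrightarrow> measure_pmf.expectation (cond_pmf M {\<omega>. obs \<omega> = t}) h = D"
  shows "perfectly_secured M obs h"
proof -
  have Q: "measure_pmf.expectation M (\<lambda>\<omega>. (if obs \<omega> = t then 1 else 0) * h \<omega>) =
      D * measure_pmf.expectation M (\<lambda>\<omega>. (if obs \<omega> = t then 1 else 0) * (1::real))" if t: "t \<in> obs ` set_pmf M" for t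
    using ce_eq(1)[OF fin t, where h=h] ce_eq(2)[OF fin t] D[OF t] by (simp add: field_simps)
  have "measure_pmf.expectation M h = D * (\<Sum>t\<in>obs ` set_pmf M. measure_pmf.expectation M (\<lambda>\<omega>. (if obs \<omega> = t then 1 else 0) * (1::real)))"
    unfolding total[OF fin, where h=h and obs=obs] by (simp add: Q sum_distrib_left)
  also have "(\<Sum>t\<in>obs ` set_pmf M. measure_pmf.expectation M (\<lambda>\<omega>. (if obs \<omega> = t then 1 else 0) * (1::real))) = 1"
    using total[OF fin, where h="\<lambda>_. 1" and obs=obs] by simp
  finally have "measure_pmf.expectation M h = D" by simp
  then show ?thesis unfolding perfectly_secured_def using D by simp
qed

lemma upd_joint:
  assumes "\<omega> \<in> set_pmf (joint_pmf n P kk)" "i < n" "(x, k) \<in> set_pmf (local_pmf P kk i)"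
  shows "((fst \<omega>)(i := x), (snd \<omega>)(i := k)) \<in> set_pmf (joint_pmf n P kk)"
  using assms unfolding mem_joint by auto

lemma eve_upd:
  assumes "i < n"
  shows "eve_obs n g (a(i := x), b(i := k)) = (eve_obs n g (a, b))(i := g i x k)"
  using assms by (auto simp: eve_obs_def fun_eq_iff)

lemma base_joint:
  assumes "\<forall>j<n. xs j \<in> set_pmf (P j)"
  shows "(\<lambda>j. if j < n then xs j else undefined, \<lambda>j. if j < n then 1 else 0) \<in> set_pmf (joint_pmf n P kk)"
  using assms unfolding mem_joint by (auto simp: local_pmf_def set_key_pmf)

lemma exp_local_fst:
  "measure_pmf.expectation (local_pmf P kk j) (\<lambda>(x, k). F x) = measure_pmf.expectation (P j) (F :: 'x \<Rightarrow> real)"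
proof -
  have e: "(\<lambda>(x, k). F x) = (\<lambda>p. F (fst p))" by (auto simp: fun_eq_iff)
  show ?thesis unfolding local_pmf_def e by (rule expectation_pair_pmf_fst)
qed

lemma exp_zero_support:
  assumes "\<forall>x\<in>set_pmf p. F x = (0::real)"
  shows "measure_pmf.expectation p F = 0"
proof -
  have "measure_pmf.expectation p F = measure_pmf.expectation p (\<lambda>_. 0::real)"
    using assms by (intro integral_cong_AE) (auto simp: AE_measure_pmf_iff)
  then show ?thesis by simp
qed

theorem theorem2:
  fixes n :: nat and P :: "nat \<Rightarrow> 'x pmf" and kk :: "nat \<Rightarrow> nat"
    and g :: "nat \<Rightarrow> 'x \<Rightarrow> nat \<Rightarrow> 'y"
  assumes fin: "\<forall>i<n. finite (set_pmf (P i))"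
  shows
    "(\<forall>(L::nat) (F::nat \<Rightarrow> nat \<Rightarrow> 'x \<Rightarrow> real).
        receiver_computes n P kk g (\<lambda>xs. \<Sum>l<L. \<Prod>i<n. F l i (xs i)) \<and>
        (\<forall>i<n. \<forall>l<L. perfectly_secured (local_pmf P kk i) (\<lambda>(x, k). g i x k) (\<lambda>(x, k). F l i x))
        \<longrightarrow> perfectly_secured (joint_pmf n P kk) (eve_obs n g)
              (\<lambda>\<omega>. \<Sum>l<L. \<Prod>i<n. F l i (fst \<omega> i)))
   \<and>
     (\<forall>(F::nat \<Rightarrow> 'x \<Rightarrow> real) (f::(nat \<Rightarrow> 'x) \<Rightarrow> real).
        (f = (\<lambda>xs. \<Sum>i<n. F i (xs i)) \<or>
         (f = (\<lambda>xs. \<Prod>i<n. F i (xs i)) \<and>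
          (\<Prod>i<n. measure_pmf.expectation (P i) (F i) * measure_pmf.variance (P i) (F i)) \<noteq> 0)) \<and>
        receiver_computes n P kk g f \<and>
        perfectly_secured (joint_pmf n P kk) (eve_obs n g) (\<lambda>\<omega>. f (fst \<omega>))
        \<longrightarrow> (\<forall>i<n. locally_recoverable P kk g i (F i) \<and>
                   perfectly_secured (local_pmf P kk i) (\<lambda>(x, k). g i x k) (\<lambda>(x, k). F i x)))"
proof (intro conjI)
  show "\<forall>(L::nat) (F::nat \<Rightarrow> nat \<Rightarrow> 'x \<Rightarrow> real).
        receiver_computes n P kk g (\<lambda>xs. \<Sum>l<L. \<Prod>i<n. F l i (xs i)) \<and>
        (\<forall>i<n. \<forall>l<L. perfectly_secured (local_pmf P kk i) (\<lambda>(x, k). g i x k) (\<lambda>(x, k). F l i x))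
        \<longrightarrow> perfectly_secured (joint_pmf n P kk) (eve_obs n g)
              (\<lambda>\<omega>. \<Sum>l<L. \<Prod>i<n. F l i (fst \<omega> i))"
  proof (intro allI impI)
    fix L :: nat and F :: "nat \<Rightarrow> nat \<Rightarrow> 'x \<Rightarrow> real"
    assume H: "receiver_computes n P kk g (\<lambda>xs. \<Sum>l<L. \<Prod>i<n. F l i (xs i)) \<and>
        (\<forall>i<n. \<forall>l<L. perfectly_secured (local_pmf P kk i) (\<lambda>(x, k). g i x k) (\<lambda>(x, k). F l i x))"
    then have sec: "\<And>i l y. i < n \<Longrightarrow> l < L \<Longrightarrow> y \<in> (\<lambda>(x, k). g i x k) ` set_pmf (local_pmf P kk i) \<Longrightarrow>
       measure_pmf.expectation (cond_pmf (local_pmf P kk i) {\<omega>. (\<lambda>(x, k). g i x k) \<omega> = y}) (\<lambda>(x, k). F l i x)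
       = measure_pmf.expectation (local_pmf P kk i) (\<lambda>(x, k). F l i x)"
      unfolding perfectly_secured_def by blast
    show "perfectly_secured (joint_pmf n P kk) (eve_obs n g) (\<lambda>\<omega>. \<Sum>l<L. \<Prod>i<n. F l i (fst \<omega> i))"
      unfolding perfectly_secured_def
    proof
      fix y assume y: "y \<in> eve_obs n g ` set_pmf (joint_pmf n P kk)"
      have ne: "set_pmf (joint_pmf n P kk) \<inter> {\<omega>. eve_obs n g \<omega> = y} \<noteq> {}" using y by auto
      have finc: "finite (set_pmf (cond_pmf (joint_pmf n P kk) {\<omega>. eve_obs n g \<omega> = y}))"
        by (rule fin_cond[OF fin_joint[OF fin] ne])
      have "measure_pmf.expectation (cond_pmf (joint_pmf n P kk) {\<omega>. eve_obs n g \<omega> = y}) (\<lambda>\<omega>. \<Sum>l<L. \<Prod>i<n. F l i (fst \<omega> i))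
         = (\<Sum>l<L. measure_pmf.expectation (cond_pmf (joint_pmf n P kk) {\<omega>. eve_obs n g \<omega> = y}) (\<lambda>\<omega>. \<Prod>i<n. F l i (fst \<omega> i)))"
        by (rule Bochner_Integration.integral_sum) (rule integrable_measure_pmf_finite[OF finc])
      also have "\<dots> = (\<Sum>l<L. \<Prod>i<n. measure_pmf.expectation (cond_pmf (local_pmf P kk i) {\<omega>. (\<lambda>(x, k). g i x k) \<omega> = y i}) (\<lambda>(x, k). F l i x))"
      proof (intro sum.cong refl)
        fix l
        show "measure_pmf.expectation (cond_pmf (joint_pmf n P kk) {\<omega>. eve_obs n g \<omega> = y}) (\<lambda>\<omega>. \<Prod>i<n. F l i (fst \<omega> i)) =
          (\<Prod>i<n. measure_pmf.expectation (cond_pmf (local_pmf P kk i) {\<omega>. (\<lambda>(x, k). g i x k) \<omega> = y i}) (\<lambda>(x, k). F l i x))"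
          using ce_joint[OF fin y, where u="\<lambda>i x k. F l i x"] by simp
      qed
      also have "\<dots> = (\<Sum>l<L. \<Prod>i<n. measure_pmf.expectation (local_pmf P kk i) (\<lambda>(x, k). F l i x))"
        by (intro sum.cong prod.cong refl sec eve_img_local[OF y]) auto
      also have "\<dots> = (\<Sum>l<L. measure_pmf.expectation (joint_pmf n P kk) (\<lambda>\<omega>. \<Prod>i<n. F l i (fst \<omega> i)))"
      proof (intro sum.cong refl)
        fix l
        show "(\<Prod>i<n. measure_pmf.expectation (local_pmf P kk i) (\<lambda>(x, k). F l i x)) =
           measure_pmf.expectation (joint_pmf n P kk) (\<lambda>\<omega>. \<Prod>i<n. F l i (fst \<omega> i))"
          using exp_joint_prod[OF fin, where v="\<lambda>i x k. F l i x" and kk=kk] by simp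
      qed
      also have "\<dots> = measure_pmf.expectation (joint_pmf n P kk) (\<lambda>\<omega>. \<Sum>l<L. \<Prod>i<n. F l i (fst \<omega> i))"
        by (rule Bochner_Integration.integral_sum[symmetric]) (rule integrable_measure_pmf_finite[OF fin_joint[OF fin]])
      finally show "measure_pmf.expectation (cond_pmf (joint_pmf n P kk) {\<omega>. eve_obs n g \<omega> = y}) (\<lambda>\<omega>. \<Sum>l<L. \<Prod>i<n. F l i (fst \<omega> i))
         = measure_pmf.expectation (joint_pmf n P kk) (\<lambda>\<omega>. \<Sum>l<L. \<Prod>i<n. F l i (fst \<omega> i))" .
    qed
  qed
next
  show "(\<forall>(F::nat \<Rightarrow> 'x \<Rightarrow> real) (f::(nat \<Rightarrow> 'x) \<Rightarrow> real).
        (f = (\<lambda>xs. \<Sum>i<n. F i (xs i)) \<or>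
         (f = (\<lambda>xs. \<Prod>i<n. F i (xs i)) \<and>
          (\<Prod>i<n. measure_pmf.expectation (P i) (F i) * measure_pmf.variance (P i) (F i)) \<noteq> 0)) \<and>
        receiver_computes n P kk g f \<and>
        perfectly_secured (joint_pmf n P kk) (eve_obs n g) (\<lambda>\<omega>. f (fst \<omega>))
        \<longrightarrow> (\<forall>i<n. locally_recoverable P kk g i (F i) \<and>
                   perfectly_secured (local_pmf P kk i) (\<lambda>(x, k). g i x k) (\<lambda>(x, k). F i x)))"
  proof (rule allI, rule allI, rule impI)
    fix F :: "nat \<Rightarrow> 'x \<Rightarrow> real" and f :: "(nat \<Rightarrow> 'x) \<Rightarrow> real"
    assume H: "(f = (\<lambda>xs. \<Sum>i<n. F i (xs i)) \<or>
         (f = (\<lambda>xs. \<Prod>i<n. F i (xs i)) \<and>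
          (\<Prod>i<n. measure_pmf.expectation (P i) (F i) * measure_pmf.variance (P i) (F i)) \<noteq> 0)) \<and>
        receiver_computes n P kk g f \<and>
        perfectly_secured (joint_pmf n P kk) (eve_obs n g) (\<lambda>\<omega>. f (fst \<omega>))"
    define C where "C \<longleftrightarrow> f = (\<lambda>xs. \<Prod>i<n. F i (xs i)) \<and>
          (\<Prod>i<n. measure_pmf.expectation (P i) (F i) * measure_pmf.variance (P i) (F i)) \<noteq> 0"
    have hf: "f = (\<lambda>xs. \<Sum>i<n. F i (xs i)) \<or> C" using H C_def by blast
    from H obtain dec where dec: "\<And>\<omega>. \<omega> \<in> set_pmf (joint_pmf n P kk) \<Longrightarrow> dec (eve_obs n g \<omega>) (snd \<omega>) = f (fst \<omega>)"
      unfolding receiver_computes_def by blast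
    from H have ps: "\<And>y. y \<in> eve_obs n g ` set_pmf (joint_pmf n P kk) \<Longrightarrow>
        measure_pmf.expectation (cond_pmf (joint_pmf n P kk) {\<omega>. eve_obs n g \<omega> = y}) (\<lambda>\<omega>. f (fst \<omega>)) =
        measure_pmf.expectation (joint_pmf n P kk) (\<lambda>\<omega>. f (fst \<omega>))"
      unfolding perfectly_secured_def by blast
    have EC: "C \<Longrightarrow> measure_pmf.expectation (P j) (F j) \<noteq> 0" if j: "j < n" for j
      unfolding C_def using j by auto
    have "\<forall>j. \<exists>x. j < n \<longrightarrow> x \<in> set_pmf (P j) \<and> (C \<longrightarrow> F j x \<noteq> 0)"
    proof (intro allI)
      fix j
      show "\<exists>x. j < n \<longrightarrow> x \<in> set_pmf (P j) \<and> (C \<longrightarrow> F j x \<noteq> 0)"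
      proof (cases "j < n \<and> C")
        case True
        then have "measure_pmf.expectation (P j) (F j) \<noteq> 0" using EC by blast
        then have "\<not> (\<forall>x\<in>set_pmf (P j). F j x = 0)" using exp_zero_support[of "P j" "F j"] by auto
        then obtain x where "x \<in> set_pmf (P j)" "F j x \<noteq> 0" by auto
        then show ?thesis by blast
      next
        case False
        obtain x where "x \<in> set_pmf (P j)" using set_pmf_not_empty[of "P j"] by blast
        then show ?thesis using False by blast
      qed
    qed
    then obtain xs where xs0: "\<forall>j. j < n \<longrightarrow> xs j \<in> set_pmf (P j) \<and> (C \<longrightarrow> F j (xs j) \<noteq> 0)"
      by (rule choice[THEN exE]) blast
    have xs: "\<And>j. j < n \<Longrightarrow> xs j \<in> set_pmf (P j) \<and> (C \<longrightarrow> F j (xs j) \<noteq> 0)" using xs0 by blast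
    define a where "a = (\<lambda>j. if j < n then xs j else undefined)"
    define b where "b = (\<lambda>j. if j < n then 1 else (0::nat))"
    have w0: "(a, b) \<in> set_pmf (joint_pmf n P kk)"
      unfolding a_def b_def by (rule base_joint) (use xs in auto)
    have anz: "C \<Longrightarrow> F j (a j) \<noteq> 0" if "j < n" for j using xs that unfolding a_def by auto
    define Y0 where "Y0 = eve_obs n g (a, b)"
    show "\<forall>i<n. locally_recoverable P kk g i (F i) \<and>
                   perfectly_secured (local_pmf P kk i) (\<lambda>(x, k). g i x k) (\<lambda>(x, k). F i x)"
    proof (intro allI impI)
      fix i assume i: "i < n"
      have wxk: "(a(i := x), b(i := k)) \<in> set_pmf (joint_pmf n P kk)" if "(x, k) \<in> set_pmf (local_pmf P kk i)" for x k
        using upd_joint[OF w0 i that] by simp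
      have exk: "eve_obs n g (a(i := x), b(i := k)) = Y0(i := g i x k)" for x k
        unfolding Y0_def by (rule eve_upd[OF i])
      have sum_split: "(\<Sum>j<n. G j ((a(i := x)) j)) = G i x + (\<Sum>j\<in>{..<n} - {i}. G j (a j))" for G :: "nat \<Rightarrow> 'x \<Rightarrow> real" and x
      proof -
        have "(\<Sum>j<n. G j ((a(i := x)) j)) = G i ((a(i := x)) i) + (\<Sum>j\<in>{..<n} - {i}. G j ((a(i := x)) j))"
          using i by (subst sum.remove[of "{..<n}" i]) auto
        also have "(\<Sum>j\<in>{..<n} - {i}. G j ((a(i := x)) j)) = (\<Sum>j\<in>{..<n} - {i}. G j (a j))"
          by (intro sum.cong) auto
        finally show ?thesis by simp
      qed
      have prod_split: "(\<Prod>j<n. G j ((a(i := x)) j)) = G i x * (\<Prod>j\<in>{..<n} - {i}. G j (a j))" for G :: "nat \<Rightarrow> 'x \<Rightarrow> real" and x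
      proof -
        have "(\<Prod>j<n. G j ((a(i := x)) j)) = G i ((a(i := x)) i) * (\<Prod>j\<in>{..<n} - {i}. G j ((a(i := x)) j))"
          using i by (subst prod.remove[of "{..<n}" i]) auto
        also have "(\<Prod>j\<in>{..<n} - {i}. G j ((a(i := x)) j)) = (\<Prod>j\<in>{..<n} - {i}. G j (a j))"
          by (intro prod.cong) auto
        finally show ?thesis by simp
      qed
      have L1: "locally_recoverable P kk g i (F i)"
        unfolding locally_recoverable_def
      proof -
        from hf show "\<exists>dec. \<forall>(x, k)\<in>set_pmf (local_pmf P kk i). dec (g i x k) k = F i x"
        proof
          assume fs: "f = (\<lambda>xs. \<Sum>i<n. F i (xs i))"
          show ?thesis
          proof (intro exI ballI, clarify)
            fix x k assume xk: "(x, k) \<in> set_pmf (local_pmf P kk i)"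
            have "dec (Y0(i := g i x k)) (b(i := k)) = f (a(i := x))"
              using dec[OF wxk[OF xk]] exk by simp
            then show "dec (Y0(i := g i x k)) (b(i := k)) - (\<Sum>j\<in>{..<n} - {i}. F j (a j)) = F i x"
              using fs sum_split[of F x] by simp
          qed
        next
          assume c: C
          then have fp: "f = (\<lambda>xs. \<Prod>i<n. F i (xs i))" unfolding C_def by blast
          have R: "(\<Prod>j\<in>{..<n} - {i}. F j (a j)) \<noteq> 0" using anz[OF _ c] by auto
          show ?thesis
          proof (intro exI ballI, clarify)
            fix x k assume xk: "(x, k) \<in> set_pmf (local_pmf P kk i)"
            have "dec (Y0(i := g i x k)) (b(i := k)) = f (a(i := x))"
              using dec[OF wxk[OF xk]] exk by simp
            then show "dec (Y0(i := g i x k)) (b(i := k)) / (\<Prod>j\<in>{..<n} - {i}. F j (a j)) = F i x"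
              using fp prod_split[of F x] R by simp
          qed
        qed
      qed
      define ceL where "ceL j t = measure_pmf.expectation (cond_pmf (local_pmf P kk j) {\<omega>. (\<lambda>(x, k). g j x k) \<omega> = t}) (\<lambda>(x, k). F j x)" for j t
      have yimg: "Y0(i := g i x k) \<in> eve_obs n g ` set_pmf (joint_pmf n P kk)" if "(x, k) \<in> set_pmf (local_pmf P kk i)" for x k
        by (rule image_eqI[where x="(a(i:=x), b(i:=k))"]) (use wxk[OF that] exk[of x k] in auto)
      have Y0img: "Y0 \<in> eve_obs n g ` set_pmf (joint_pmf n P kk)" unfolding Y0_def using w0 by blast
      have ceJ: "measure_pmf.expectation (cond_pmf (joint_pmf n P kk) {\<omega>. eve_obs n g \<omega> = y}) (\<lambda>\<omega>. F j (fst \<omega> j)) = ceL j (y j)"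
        if "y \<in> eve_obs n g ` set_pmf (joint_pmf n P kk)" "j < n" for y j
        using ce_single[OF fin that, where h="\<lambda>x k. F j x"] unfolding ceL_def by simp
      have "\<exists>D. \<forall>t \<in> (\<lambda>(x, k). g i x k) ` set_pmf (local_pmf P kk i). ceL i t = D"
        using hf
      proof
        assume fs: "f = (\<lambda>xs. \<Sum>i<n. F i (xs i))"
        let ?R = "\<Sum>j\<in>{..<n} - {i}. ceL j (Y0 j)"
        show ?thesis
        proof (intro exI ballI)
          fix t assume "t \<in> (\<lambda>(x, k). g i x k) ` set_pmf (local_pmf P kk i)"
          then obtain x k where xk: "(x, k) \<in> set_pmf (local_pmf P kk i)" and t: "t = g i x k" by auto
          let ?y = "Y0(i := t)"
          have y: "?y \<in> eve_obs n g ` set_pmf (joint_pmf n P kk)" using yimg[OF xk] t by simp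
          have ne: "set_pmf (joint_pmf n P kk) \<inter> {\<omega>. eve_obs n g \<omega> = ?y} \<noteq> {}" using y by auto
          have finc: "finite (set_pmf (cond_pmf (joint_pmf n P kk) {\<omega>. eve_obs n g \<omega> = ?y}))"
            by (rule fin_cond[OF fin_joint[OF fin] ne])
          have "measure_pmf.expectation (joint_pmf n P kk) (\<lambda>\<omega>. f (fst \<omega>)) =
              measure_pmf.expectation (cond_pmf (joint_pmf n P kk) {\<omega>. eve_obs n g \<omega> = ?y}) (\<lambda>\<omega>. \<Sum>j<n. F j (fst \<omega> j))"
            using ps[OF y] fs by simp
          also have "\<dots> = (\<Sum>j<n. measure_pmf.expectation (cond_pmf (joint_pmf n P kk) {\<omega>. eve_obs n g \<omega> = ?y}) (\<lambda>\<omega>. F j (fst \<omega> j)))"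
            by (rule Bochner_Integration.integral_sum) (rule integrable_measure_pmf_finite[OF finc])
          also have "\<dots> = (\<Sum>j<n. ceL j (?y j))"
            by (intro sum.cong refl ceJ[OF y]) auto
          also have "\<dots> = ceL i t + ?R"
            using i by (subst sum.remove[of "{..<n}" i]) (auto intro!: sum.cong)
          finally show "ceL i t = measure_pmf.expectation (joint_pmf n P kk) (\<lambda>\<omega>. f (fst \<omega>)) - ?R" by simp
        qed
      next
        assume c: C
        then have fp: "f = (\<lambda>xs. \<Prod>i<n. F i (xs i))" unfolding C_def by blast
        let ?R = "\<Prod>j\<in>{..<n} - {i}. ceL j (Y0 j)"
        have Ef: "measure_pmf.expectation (joint_pmf n P kk) (\<lambda>\<omega>. f (fst \<omega>)) \<noteq> 0"
        proof -
          have "measure_pmf.expectation (joint_pmf n P kk) (\<lambda>\<omega>. f (fst \<omega>)) =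
              (\<Prod>j<n. measure_pmf.expectation (local_pmf P kk j) (\<lambda>(x, k). F j x))"
            using exp_joint_prod[OF fin, where v="\<lambda>j x k. F j x" and kk=kk] fp by simp
          also have "\<dots> = (\<Prod>j<n. measure_pmf.expectation (P j) (F j))"
            by (simp add: exp_local_fst)
          also have "\<dots> \<noteq> 0" using EC[OF _ c] by simp
          finally show ?thesis .
        qed
        show ?thesis
        proof (intro exI ballI)
          fix t assume "t \<in> (\<lambda>(x, k). g i x k) ` set_pmf (local_pmf P kk i)"
          then obtain x k where xk: "(x, k) \<in> set_pmf (local_pmf P kk i)" and t: "t = g i x k" by auto
          let ?y = "Y0(i := t)"
          have y: "?y \<in> eve_obs n g ` set_pmf (joint_pmf n P kk)" using yimg[OF xk] t by simp
          have "measure_pmf.expectation (joint_pmf n P kk) (\<lambda>\<omega>. f (fst \<omega>)) =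
              measure_pmf.expectation (cond_pmf (joint_pmf n P kk) {\<omega>. eve_obs n g \<omega> = ?y}) (\<lambda>\<omega>. \<Prod>j<n. F j (fst \<omega> j))"
            using ps[OF y] fp by simp
          also have "\<dots> = (\<Prod>j<n. ceL j (?y j))"
            using ce_joint[OF fin y, where u="\<lambda>j x k. F j x"] unfolding ceL_def by simp
          also have "\<dots> = ceL i t * ?R"
            using i by (subst prod.remove[of "{..<n}" i]) (auto intro!: prod.cong)
          finally have eq: "measure_pmf.expectation (joint_pmf n P kk) (\<lambda>\<omega>. f (fst \<omega>)) = ceL i t * ?R" .
          then have "?R \<noteq> 0" using Ef by auto
          then show "ceL i t = measure_pmf.expectation (joint_pmf n P kk) (\<lambda>\<omega>. f (fst \<omega>)) / ?R"
            using eq by (simp add: field_simps)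
        qed
      qed
      then obtain D where D: "\<And>t. t \<in> (\<lambda>(x, k). g i x k) ` set_pmf (local_pmf P kk i) \<Longrightarrow> ceL i t = D" by blast
      have L2: "perfectly_secured (local_pmf P kk i) (\<lambda>(x, k). g i x k) (\<lambda>(x, k). F i x)"
        by (rule const_ce[OF fin_local, where D=D]) (use fin i D in \<open>auto simp: ceL_def\<close>)
      show "locally_recoverable P kk g i (F i) \<and> perfectly_secured (local_pmf P kk i) (\<lambda>(x, k). g i x k) (\<lambda>(x, k). F i x)"
        using L1 L2 by blast
    qed
  qed
qed

end
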